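(* Let $1\le d\le r$ and $0\le k\le r-1$ be integers. Then: (i) All entries of $g^{r,d}_k$ are non-negative, and $\mathrm{last}(g^{r,d}_k)=0$ if and only if either ($d$ is even, $d=r$ and $k=0$) or ($d=1$ and $k>0$). (ii) If $d$ is odd, then $\mathrm{last}(\hat g^{r,d}_k)>0$ for $k\ge d/2$ and $\mathrm{last}(\hat g^{r,d}_k)<0$ for $k<d/2$. (iii) If $d$ is even, then $\mathrm{last}(\hat g^{r,d}_k)>0$ for $k>\frac{d+r}{2}$ and $\mathrm{last}(\hat g^{r,d}_k)<0$ for $k<\frac{d+r}{2}$; moreover, if $r$ is even, then $\mathrm{last}(\hat g^{r,d}_{(d+r)/2})=0$.
   Context: For integers $r\ge0$, $d\ge1$ and $i\in\mathbb Z$, $C(r,d,i)$ denotes the number of integer vectors $(u_1,\dots,u_d)$ with $u_1+\cdots+u_d=i$ and $0\le u_l\le r$ for all $l$. For integers $d\ge1$, $r\ge1$, $k\ge0$: if $0\le k\le r-1$, let $\hat g^{r,d}_k=(g_0,g_1,\dots,g_{\lfloor d/2\rfloor+1})\in\mathbb Z^{\lfloor d/2\rfloor+2}$ with $g_0=C(r-1,d,-k)=\delta_{0,k}$ and $g_i=C(r-1,d,ir-k)-C(r-1,d,(i-1)r-k)$ for $1\le i\le\lfloor d/2\rfloor+1$; if $k\ge r$, $\hat g^{r,d}_k$ is the zero vector. The vector $g^{r,d}_k\in\mathbb Z^{\lfloor d/2\rfloor+1}$ is obtained from $\hat g^{r,d}_k$ by deleting its last entry. For a vector $v$, $\mathrm{last}(v)$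 denotes its rightmost entry. *)

theory Defs
  imports Main
begin

definition Ccount :: "nat \<Rightarrow> nat \<Rightarrow> int \<Rightarrow> int" where
  "Ccount r d i = int (card {u :: nat list. length u = d \<and> (\<forall>x\<in>set u. x \<le> r) \<and> int (sum_list u) = i})"

definition ghat :: "nat \<Rightarrow> nat \<Rightarrow> nat \<Rightarrow> int list" where
  "ghat r d k = (if k < r then
     map (\<lambda>i. if i = 0 then Ccount (r - 1) d (- int k)
               else Ccount (r - 1) d (int i * int r - int k) - Ccount (r - 1) d ((int i - 1) * int r - int k))
         [0..<d div 2 + 2]
   else replicate (d div 2 + 2) 0)"

definition gvec :: "nat \<Rightarrow> nat \<Rightarrow> nat \<Rightarrow> int list" where
  "gvec r d k = butlast (ghat r d k)"

end

theory Submission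
  imports Defs
begin

fun cc :: "nat \<Rightarrow> nat \<Rightarrow> int \<Rightarrow> int" where
  "cc m 0 j = (if j = 0 then 1 else 0)"
| "cc m (Suc d) j = (\<Sum>u\<in>{0..m}. cc m d (j - int u))"

lemma Ccount_cc: "Ccount m d j = cc m d j"
proof (induction d arbitrary: j)
  case 0
  have "{u :: nat list. length u = 0 \<and> (\<forall>x\<in>set u. x \<le> m) \<and> int (sum_list u) = j}
        = (if j = 0 then {[]} else {})" by auto
  then show ?case by (simp add: Ccount_def)
next
  case (Suc d)
  let ?S = "\<lambda>d j. {u :: nat list. length u = d \<and> (\<forall>x\<in>set u. x \<le> m) \<and> int (sum_list u) = j}"
  have fin: "finite (?S d j)" for d j
    by (rule finite_subset[OF _ finite_lists_length_eq[OF finite_atLeastAtMost[of 0 m], of d]]) auto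
  have eq: "?S (Suc d) j = (\<Union>x\<in>{0..m}. (Cons x) ` ?S d (j - int x))"
  proof (intro set_eqI iffI)
    fix u assume "u \<in> ?S (Suc d) j"
    then obtain x xs where "u = x # xs" "length xs = d" "x \<le> m" "\<forall>y\<in>set xs. y \<le> m" "int (sum_list xs) = j - int x"
      by (cases u) auto
    then show "u \<in> (\<Union>x\<in>{0..m}. (Cons x) ` ?S d (j - int x))" by auto
  qed auto
  have "card (?S (Suc d) j) = (\<Sum>x\<in>{0..m}. card ((Cons x) ` ?S d (j - int x)))"
    unfolding eq by (rule card_UN_disjoint) (auto intro: fin)
  also have "\<dots> = (\<Sum>x\<in>{0..m}. card (?S d (j - int x)))"
    by (rule sum.cong) (auto intro: card_image)
  finally show ?case using Suc by (simp add: Ccount_def)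
qed

lemma cc_nonneg: "cc m d j \<ge> 0"
  by (induction d arbitrary: j) (auto intro: sum_nonneg)

lemma cc_one: "cc m 1 j = (if 0 \<le> j \<and> j \<le> int m then 1 else 0)"
proof (cases "0 \<le> j \<and> j \<le> int m")
  case True
  then obtain u where u: "j = int u" "u \<le> m" by (metis nat_0_le nat_le_iff)
  have "(\<Sum>x\<in>{0..m}. (if j - int x = 0 then 1 else 0::int)) = (\<Sum>x\<in>{u}. 1)"
    by (rule sum.mono_neutral_cong_right) (use u in auto)
  then show ?thesis using True by simp
next
  case False
  have "(\<Sum>x\<in>{0..m}. (if j - int x = 0 then 1 else 0::int)) = 0"
    by (rule sum.neutral) (use False in auto)
  then show ?thesis using False by simp
qed

lemma cc_sym: "cc m d (int d * int m - j) = cc m d j"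
proof (induction d arbitrary: j)
  case 0 then show ?case by auto
next
  case (Suc d)
  have "cc m (Suc d) (int (Suc d) * int m - j) = (\<Sum>u\<in>{0..m}. cc m d (int d * int m - (j + int u - int m)))"
    by (simp add: algebra_simps)
  also have "\<dots> = (\<Sum>u\<in>{0..m}. cc m d (j + int u - int m))" using Suc by simp
  also have "\<dots> = (\<Sum>u\<in>{0..m}. cc m d (j + int (m + 0 - u) - int m))"
    by (rule sum.atLeastAtMost_rev)
  also have "\<dots> = (\<Sum>u\<in>{0..m}. cc m d (j - int u))"
    by (rule sum.cong) (auto simp: of_nat_diff)
  finally show ?case by simp
qed

lemma cc_diff: "cc m (Suc d) j - cc m (Suc d) (j - 1) = cc m d j - cc m d (j - int m - 1)"
proof -
  have "(\<Sum>u\<in>{0..m}. cc m d (j - 1 - int u)) = (\<Sum>u\<in>{Suc 0..Suc m}. cc m d (j - int u))"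
    by (subst sum.shift_bounds_cl_Suc_ivl) (simp add: algebra_simps)
  also have "\<dots> = (\<Sum>u\<in>{Suc 0..m}. cc m d (j - int u)) + cc m d (j - int m - 1)"
    by (simp add: algebra_simps)
  finally have 1: "(\<Sum>u\<in>{0..m}. cc m d (j - 1 - int u)) = (\<Sum>u\<in>{Suc 0..m}. cc m d (j - int u)) + cc m d (j - int m - 1)" .
  have 2: "(\<Sum>u\<in>{0..m}. cc m d (j - int u)) = cc m d j + (\<Sum>u\<in>{Suc 0..m}. cc m d (j - int u))"
    by (subst sum.atLeast_Suc_atMost) auto
  show ?thesis using 1 2 by simp
qed

lemma chain:
  fixes f :: "int \<Rightarrow> int"
  assumes "\<And>j. j \<le> t \<Longrightarrow> f (j - 1) \<le> f j" "b \<le> t"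
  shows "f b \<le> f t"
proof -
  obtain n where n: "t = b + int n" using assms(2) by (metis le_iff_add zle_iff_zadd)
  have "f b \<le> f (b + int n)" if "b + int n \<le> t" for n
    using that
  proof (induction n)
    case 0 then show ?case by simp
  next
    case (Suc n)
    have "f (b + int (Suc n) - 1) \<le> f (b + int (Suc n))" using assms(1) Suc.prems by blast
    then show ?case using Suc by simp
  qed
  then show ?thesis using n by simp
qed

lemma W_gen:
  fixes f :: "int \<Rightarrow> int"
  assumes sym: "\<And>j. f (N - j) = f j" and mono: "\<And>j. 2 * j \<le> N \<Longrightarrow> f (j - 1) \<le> f j"
    and "b \<le> a" "a + b \<le> N"
  shows "f b \<le> f a"
proof (cases "2 * a \<le> N")
  case True
  then show ?thesis using chain[of a f b] mono assms(3) by auto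
next
  case False
  have "f b \<le> f (N - a)" using chain[of "N - a" f b] mono assms(4) False by auto
  then show ?thesis using sym by simp
qed

lemma S_gen:
  fixes f :: "int \<Rightarrow> int"
  assumes sym: "\<And>j. f (N - j) = f j" and mono: "\<And>j. 2 * j \<le> N \<Longrightarrow> f (j - 1) \<le> f j"
    and strict: "\<And>j. 0 \<le> j \<Longrightarrow> 2 * j \<le> N \<Longrightarrow> f (j - 1) < f j"
    and "b < a" "a + b < N" "0 \<le> a" "a \<le> N"
  shows "f b < f a"
proof -
  define t where "t = (if 2 * a \<le> N then a else N - a)"
  have ft: "f t = f a" using sym by (simp add: t_def)
  have t: "b \<le> t - 1" "0 \<le> t" "2 * t \<le> N" using assms(4-7) by (auto simp: t_def)
  have "f b \<le> f (t - 1)" using chain[of "t - 1" f b] mono t by auto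
  also have "\<dots> < f t" using strict t by auto
  finally show ?thesis using ft by simp
qed

lemma S_mirror:
  fixes f :: "int \<Rightarrow> int"
  assumes sym: "\<And>j. f (N - j) = f j" and mono: "\<And>j. 2 * j \<le> N \<Longrightarrow> f (j - 1) \<le> f j"
    and strict: "\<And>j. 0 \<le> j \<Longrightarrow> 2 * j \<le> N \<Longrightarrow> f (j - 1) < f j"
    and "b < a" "a + b > N" "0 \<le> b" "b \<le> N"
  shows "f a < f b"
proof -
  have "f (N - a) < f (N - b)" by (rule S_gen[OF sym mono strict]) (use assms(4-7) in auto)
  then show ?thesis using sym by simp
qed

lemma cc_mono: "2 * j \<le> int d * int m \<Longrightarrow> cc m d (j - 1) \<le> cc m d j"
proof (induction d arbitrary: j)
  case 0 then show ?case by auto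
next
  case (Suc d)
  have "cc m d (j - int m - 1) \<le> cc m d j"
    apply (rule W_gen[of "cc m d" "int d * int m"])
    subgoal by (rule cc_sym)
    using Suc by (auto simp: algebra_simps)
  then show ?case using cc_diff[of m d j] by simp
qed

lemma cc_strict2: "1 \<le> m \<Longrightarrow> 0 \<le> j \<Longrightarrow> 2 * j \<le> int (Suc (Suc d)) * int m \<Longrightarrow> cc m (Suc (Suc d)) (j - 1) < cc m (Suc (Suc d)) j"
proof (induction d arbitrary: j)
  case 0
  have "cc m (Suc (Suc 0)) j - cc m (Suc (Suc 0)) (j - 1) = cc m 1 j - cc m 1 (j - int m - 1)"
    using cc_diff[of m "Suc 0" j] by simp
  also have "\<dots> = 1" using 0 by (simp only: cc_one) simp
  finally show ?case by simp
next
  case (Suc d)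
  let ?N = "int (Suc (Suc d)) * int m"
  have nn: "0 \<le> int d * int m" by simp
  have st: "\<And>j. 0 \<le> j \<Longrightarrow> 2 * j \<le> ?N \<Longrightarrow> cc m (Suc (Suc d)) (j - 1) < cc m (Suc (Suc d)) j"
    using Suc.IH Suc.prems(1) by blast
  have "cc m (Suc (Suc d)) (j - int m - 1) < cc m (Suc (Suc d)) j"
    apply (rule S_gen[of "cc m (Suc (Suc d))" ?N])
    subgoal by (rule cc_sym)
    subgoal by (rule cc_mono)
    subgoal by (rule st)
    using Suc.prems by (auto simp: algebra_simps) (use nn in linarith)
  then show ?case using cc_diff[of m "Suc (Suc d)" j] by simp
qed

lemma last_map2: "last (map f [0..<Suc (Suc n)]) = f (Suc n)"
  by simp

lemma butlast_map2: "butlast (map f [0..<Suc (Suc n)]) = map f [0..<Suc n]"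
  by (simp add: butlast_append)

lemma last_butlast_map2: "last (butlast (map f [0..<Suc (Suc n)])) = f n"
  unfolding butlast_map2 by simp

lemma set_butlast_map2: "set (butlast (map f [0..<Suc (Suc n)])) = f ` {0..n}"
  unfolding butlast_map2 by (simp only: set_map set_upt atLeastLessThanSuc_atLeastAtMost)

theorem mainTheorem7:
  fixes r d k :: nat
  assumes "1 \<le> d" and "d \<le> r" and "k \<le> r - 1"
  shows "((\<forall>x\<in>set (gvec r d k). x \<ge> 0) \<and>
          (last (gvec r d k) = 0 \<longleftrightarrow> (even d \<and> d = r \<and> k = 0) \<or> (d = 1 \<and> k > 0)))
       \<and> (odd d \<longrightarrow> ((2 * k \<ge> d \<longrightarrow> last (ghat r d k) > 0) \<and> (2 * k < d \<longrightarrow> last (ghat r d k) < 0)))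
       \<and> (even d \<longrightarrow> ((2 * k > d + r \<longrightarrow> last (ghat r d k) > 0) \<and> (2 * k < d + r \<longrightarrow> last (ghat r d k) < 0)
                       \<and> (even r \<longrightarrow> last (ghat r d ((d + r) div 2)) = 0)))"
proof -
  have r1: "1 \<le> r" and kr: "k < r" using assms by auto
  define m where "m = r - 1"
  define h where "h = d div 2"
  define c where "c = cc m d"
  define N where "N = int d * int m"
  define F where "F = (\<lambda>k i. if i = 0 then c (- int k) else c (int i * int r - int k) - c ((int i - 1) * int r - int k))"
  have Rm: "int m = int r - 1" using r1 m_def by simp
  have "N = int d * (int r - 1)" by (simp add: N_def Rm)
  then have Ndef: "N = int d * int r - int d" by (simp add: algebra_simps)
  have sym: "\<And>j. c (N - j) = c j" unfolding c_def N_def by (rule cc_sym)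
  have mono: "\<And>j. 2 * j \<le> N \<Longrightarrow> c (j - 1) \<le> c j" unfolding c_def N_def by (rule cc_mono)
  have strict: "c (j - 1) < c j" if "2 \<le> d" "0 \<le> j" "2 * j \<le> N" for j
  proof -
    define d' where "d' = d - 2"
    have d': "d = Suc (Suc d')" using that(1) d'_def by simp
    have m1: "1 \<le> m" using that(1) assms(2) m_def by simp
    have "2 * j \<le> int (Suc (Suc d')) * int m" using that(3) unfolding N_def d' .
    from cc_strict2[OF m1 that(2) this] show ?thesis unfolding c_def d' .
  qed
  have G: "ghat r d k' = map (F k') [0..<Suc (Suc h)]" if "k' < r" for k'
  proof -
    have "d div 2 + 2 = Suc (Suc h)" by (simp add: h_def)
    then show ?thesis using that unfolding ghat_def F_def c_def m_def Ccount_cc by presburger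
  qed
  have lastG: "last (ghat r d k') = c (int h * int r + int r - int k') - c (int h * int r - int k')"
    if "k' < r" for k'
  proof -
    have e1: "int (Suc h) * int r = int h * int r + int r" by (simp add: algebra_simps)
    have e2: "int (Suc h) - 1 = int h" by simp
    show ?thesis unfolding G[OF that] last_map2 F_def using e1 e2 by (simp only: if_False nat.distinct)
  qed
  have lastg: "last (gvec r d k) = F k h"
    unfolding gvec_def G[OF kr] last_butlast_map2 ..
  have setg: "set (gvec r d k) = F k ` {0..h}"
    unfolding gvec_def G[OF kr] set_butlast_map2 ..
  have cnn: "\<And>j. c j \<ge> 0" unfolding c_def by (rule cc_nonneg)
  have dcases: "int d = 2 * int h \<or> int d = 2 * int h + 1" unfolding h_def by presburger
  have HR: "int h * int r \<ge> 2 * int h" if "2 \<le> d"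
  proof -
    have "2 \<le> int r" using that assms(2) by simp
    then show ?thesis by (simp add: mult_left_mono mult.commute)
  qed
  have HR1: "int h * int r \<ge> int r" if "2 \<le> d"
  proof -
    have "1 \<le> int h" using that h_def by simp
    then show ?thesis using mult_right_mono[OF \<open>1 \<le> int h\<close>, of "int r"] by simp
  qed
  have DR: "int d * int r = 2 * (int h * int r) \<or> int d * int r = 2 * (int h * int r) + int r"
    using dcases by (auto simp: algebra_simps)
  have par: "(even d \<and> int d = 2 * int h \<and> int d * int r = 2 * (int h * int r)) \<or>
             (odd d \<and> int d = 2 * int h + 1 \<and> int d * int r = 2 * (int h * int r) + int r)"
  proof (cases "even d")
    case True
    then have "d = 2 * h" by (simp add: h_def)
    then show ?thesis using True by simp
  next
    case False
    then have "d = 2 * h + 1" by (simp add: h_def)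
    then show ?thesis using False by (simp add: algebra_simps)
  qed
  have Dr: "int d \<le> int r" using assms(2) by simp
  have Kr: "int k < int r" using kr by simp
  show ?thesis
  proof (intro conjI impI)
    show "\<forall>x\<in>set (gvec r d k). x \<ge> 0"
    proof
      fix x assume "x \<in> set (gvec r d k)"
      then obtain i where i: "i \<le> h" "x = F k i" using setg by auto
      show "x \<ge> 0"
      proof (cases "i = 0")
        case True then show ?thesis using i cnn by (simp add: F_def)
      next
        case False
        have IR: "int i * int r \<le> int h * int r" using i(1) by (simp add: mult_right_mono)
        have e: "(int i - 1) * int r - int k = int i * int r - int r - int k" by (simp add: algebra_simps)
        have "c (int i * int r - int r - int k) \<le> c (int i * int r - int k)"
          using IR par Ndef Dr apply -
          apply (rule W_gen[of c N, OF sym mono])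
          by (elim disjE conjE; (linarith | simp))+
        then show ?thesis using i False e by (simp add: F_def)
      qed
    qed
    show "last (gvec r d k) = 0 \<longleftrightarrow> (even d \<and> d = r \<and> k = 0) \<or> (d = 1 \<and> k > 0)"
    proof (cases "d = 1")
      case True
      then have "h = 0" by (simp add: h_def)
      then have "last (gvec r d k) = c (- int k)" using lastg by (simp add: F_def)
      also have "\<dots> = (if k = 0 then 1 else 0)" unfolding c_def True cc_one by simp
      finally show ?thesis using True by auto
    next
      case False
      then have d2: "2 \<le> d" using assms(1) by simp
      have h1: "1 \<le> h" using d2 h_def by simp
      define a where "a = int h * int r - int k"
      define b where "b = int h * int r - int r - int k"
      have e: "(int h - 1) * int r - int k = b" by (simp add: b_def algebra_simps)
      have lv: "last (gvec r d k) = c a - c b" using lastg h1 e by (simp add: F_def a_def)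
      note hr = HR[OF d2] HR1[OF d2]
      show ?thesis
      proof (cases "even d \<and> d = r \<and> k = 0")
        case True
        have "b = N - a" using True par Ndef by (auto simp: a_def b_def)
        then have "c b = c a" using sym[of a] by simp
        then show ?thesis using True lv by auto
      next
        case F: False
        have lt: "a + b < N"
        proof (cases "even d")
          case True
          then have "d < r \<or> 0 < k" using F assms(2) by auto
          then have "int d < int r \<or> 0 < int k" by auto
          then show ?thesis using True par Ndef Dr unfolding a_def b_def
            by (elim disjE conjE; (linarith | simp))+
        next
          case False
          have "int d \<ge> 1" using assms(1) by simp
          then show ?thesis using False par Ndef Dr unfolding a_def b_def
            by (elim disjE conjE; (linarith | simp))+
        qed
        have "c b < c a"
          using lt hr par Ndef Dr Kr unfolding a_def b_def apply -
          apply (rule S_gen[OF sym mono strict[OF d2]])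
          by (elim disjE conjE; (linarith | simp))+
        then show ?thesis using False F lv by auto
      qed
    qed
  next
    define a where "a = int h * int r + int r - int k"
    define b where "b = int h * int r - int k"
    have lv: "last (ghat r d k) = c a - c b" unfolding a_def b_def by (rule lastG[OF kr])
    {
      assume od: "odd d"
      show "d \<le> 2 * k \<Longrightarrow> 0 < last (ghat r d k)"
      proof (cases "d = 1")
        case True
        assume "d \<le> 2 * k"
        then have k1: "1 \<le> k" using True by simp
        have "h = 0" using True by (simp add: h_def)
        then have "a = int r - int k" "b = - int k" by (auto simp: a_def b_def)
        then show ?thesis using lv k1 Kr Rm unfolding c_def True cc_one by simp
      next
        case False
        assume dk: "d \<le> 2 * k"
        then have d2: "2 \<le> d" using assms(1) False by simp
        note hr = HR[OF d2] HR1[OF d2]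
        have "k \<ge> h + 1" using dk od h_def by presburger
        then have kh: "int k \<ge> int h + 1" by simp
        have "c b < c a"
          using kh hr par od Ndef Dr Kr unfolding a_def b_def apply -
          apply (rule S_gen[OF sym mono strict[OF d2]])
          by (elim disjE conjE; (linarith | simp))+
        then show ?thesis using lv by simp
      qed
      show "2 * k < d \<Longrightarrow> last (ghat r d k) < 0"
      proof (cases "d = 1")
        case True
        assume "2 * k < d"
        then have k0: "k = 0" using True by simp
        have "h = 0" using True by (simp add: h_def)
        then have "a = int r" "b = 0" using k0 by (auto simp: a_def b_def)
        then show ?thesis using lv Rm unfolding c_def True cc_one by simp
      next
        case False
        assume dk: "2 * k < d"
        then have d2: "2 \<le> d" using assms(1) False by simp
        note hr = HR[OF d2] HR1[OF d2]
        have "k \<le> h" using dk od h_def by presburger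
        then have kh: "int k \<le> int h" by simp
        have "c a < c b"
          using kh hr par od Ndef Dr Kr unfolding a_def b_def apply -
          apply (rule S_mirror[OF sym mono strict[OF d2]])
          by (elim disjE conjE; (linarith | simp))+
        then show ?thesis using lv by simp
      qed
    }
    {
      assume ev: "even d"
      then have d2: "2 \<le> d" using assms(1) by presburger
      note hr = HR[OF d2] HR1[OF d2]
      show "d + r < 2 * k \<Longrightarrow> 0 < last (ghat r d k)"
      proof -
        assume "d + r < 2 * k"
        then have dk: "int d + int r < 2 * int k" by simp
        have "c b < c a"
          using dk hr par ev Ndef Dr Kr unfolding a_def b_def apply -
          apply (rule S_gen[OF sym mono strict[OF d2]])
          by (elim disjE conjE; (linarith | simp))+
        then show ?thesis using lv by simp
      qed
      show "2 * k < d + r \<Longrightarrow> last (ghat r d k) < 0"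
      proof -
        assume "2 * k < d + r"
        then have dk: "2 * int k < int d + int r" by simp
        have "c a < c b"
          using dk hr par ev Ndef Dr Kr unfolding a_def b_def apply -
          apply (rule S_mirror[OF sym mono strict[OF d2]])
          by (elim disjE conjE; (linarith | simp))+
        then show ?thesis using lv by simp
      qed
      show "even r \<Longrightarrow> last (ghat r d ((d + r) div 2)) = 0"
      proof -
        assume er: "even r"
        define k' where "k' = (d + r) div 2"
        have k2: "2 * k' = d + r" using ev er k'_def by presburger
        show ?thesis
        proof (cases "d = r")
          case True
          then have "k' = r" using k2 by simp
          then show ?thesis unfolding k'_def[symmetric] by (simp add: ghat_def)
        next
          case False
          then have kr': "k' < r" using k2 assms(2) by simp
          have k2i: "2 * int k' = int d + int r" using k2 by linarith
          have "int h * int r - int k' = N - (int h * int r + int r - int k')"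
            using k2i par ev Ndef by auto
          then have "c (int h * int r - int k') = c (int h * int r + int r - int k')"
            using sym[of "int h * int r + int r - int k'"] by (simp only:)
          then show ?thesis unfolding k'_def[symmetric] lastG[OF kr'] by simp
        qed
      qed
    }
  qed
qed
end
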